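(* Let $s_1,s_2$ be integers and $t,r_1,r_2$ nonnegative integers with $r_1\ge t$. Then in $\mathbb{Z}[x]$, $$\varphi^{s_1+t,\,s_2}_{r_1-t,\,r_2}(x)=\varphi^{s_1-t,\,s_2}_{r_1-t,\,r_2}(x)-\sum_{m=1}^{2t}\binom{2t}{m}\binom{r_1-t}{m}\,2^m\,m!\;\varphi^{s_1+t,\,s_2}_{r_1-t-m,\,r_2}(x).$$
   Context: For integers $a,b$ and integers $n,m$ define the polynomial $$\varphi^{a,b}_{n,m}(x)=\prod_{j=0}^{n-1}\bigl(x^2-x-2(a+j)\bigr)\prod_{l=0}^{m-1}\bigl(x-(b+l)\bigr)$$ when $n,m\ge0$ (empty products equal $1$), and $\varphi^{a,b}_{n,m}(x)=0$ if $n<0$ or $m<0$. (In the paper this is written $\varphi^{a,b}_{2n+m}(x)$.) Binomial coefficients $\binom{N}{m}$ are $0$ when $m>N$. *)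

theory Defs
  imports "HOL-Computational_Algebra.Polynomial"
begin

definition phi :: "int \<Rightarrow> int \<Rightarrow> int \<Rightarrow> int \<Rightarrow> int poly" where
  "phi a b n m =
     (if n < 0 \<or> m < 0 then 0
      else (\<Prod>j<nat n. [:- 2 * (a + int j), -1, 1:]) *
           (\<Prod>l<nat m. [:- (b + int l), 1:]))"

end

theory Submission
  imports Defs
begin

definition ffs :: "'a::comm_ring_1 \<Rightarrow> 'a \<Rightarrow> nat \<Rightarrow> 'a" where
  "ffs h a n = (\<Prod>j<n. a + of_nat j * h)"

lemma ffs_0 [simp]: "ffs h a 0 = 1" by (simp add: ffs_def)

lemma ffs_rec: "ffs h a (Suc n) = a * ffs h (a + h) n"
  unfolding ffs_def by (subst prod.lessThan_Suc_shift) (simp add: algebra_simps)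

lemma ffs_rec': "ffs h a (Suc n) = (a + of_nat n * h) * ffs h a n"
  unfolding ffs_def by (simp add: mult.commute)

lemma ffs_binomial_sum:
  fixes a b h :: "'a::comm_ring_1"
  shows "ffs h (a + b) n = (\<Sum>k\<le>n. of_nat (n choose k) * ffs h a k * ffs h b (n - k))"
proof (induction n arbitrary: a b)
  case 0
  then show ?case by simp
next
  case (Suc n a b)
  have "(\<Sum>k\<le>Suc n. of_nat (Suc n choose k) * ffs h a k * ffs h b (Suc n - k)) =
      (\<Sum>i\<le>n. of_nat (n choose i) * ffs h a (Suc i) * ffs h b (n - i)) +
      ((\<Sum>i\<le>n. of_nat (n choose Suc i) * ffs h a (Suc i) * ffs h b (n - i)) +
      ffs h b (Suc n))"
    by (subst sum.atMost_Suc_shift) (simp add: ring_distribs sum.distrib)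
  also have "(\<Sum>i\<le>n. of_nat (n choose i) * ffs h a (Suc i) * ffs h b (n - i)) =
      a * ffs h ((a + h) + b) n"
    by (subst Suc) (simp add: sum_distrib_left ffs_rec mult_ac)
  also have "(\<Sum>i\<le>n. of_nat(n choose Suc i) * ffs h a (Suc i) * ffs h b (n-i)) + ffs h b (Suc n)
           = of_nat (n choose 0) * ffs h a 0 * ffs h b (Suc n - 0)
           + (\<Sum>i = Suc 0..Suc n. of_nat (n choose i) * ffs h a i * ffs h b (Suc n - i))"
    unfolding sum.shift_bounds_cl_Suc_ivl by (simp add: atLeast0AtMost)
  also have "\<dots> = (\<Sum>i=0..Suc n. of_nat (n choose i) * ffs h a i * ffs h b (Suc n - i))"
    by (simp add: sum.atLeast_Suc_atMost)
  also have "\<dots> = (\<Sum>i\<le>n. of_nat (n choose i) * ffs h a i * ffs h b (Suc n - i))"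
    using Suc by (intro sum.mono_neutral_right) (auto simp: not_le binomial_eq_0)
  also have "\<dots> = (\<Sum>i\<le>n. of_nat (n choose i) * ffs h a i * ffs h b (Suc (n - i)))"
    by (simp add: Suc_diff_le)
  also have "\<dots> = b * ffs h (a + (b + h)) n"
    by (subst Suc) (simp add: sum_distrib_left mult_ac ffs_rec)
  also have "a * ffs h ((a + h) + b) n + b * ffs h (a + (b + h)) n =
      ffs h (a + b) (Suc n)"
    by (simp add: ffs_rec algebra_simps)
  finally show ?case ..
qed

lemma nat_choose_aux: "(k choose Suc m) * Suc m = (k choose m) * (k - m)"
  by (metis binomial_absorb_comp binomial_absorption mult.commute)

lemma prod_kj: "(\<Prod>j<m. (of_nat k - of_nat j :: 'a::comm_ring_1)) = of_nat ((k choose m) * fact m)"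
proof (induction m)
  case 0 then show ?case by simp
next
  case (Suc m)
  have "(k choose Suc m) * fact (Suc m) = ((k choose Suc m) * Suc m) * fact m"
    by (simp add: algebra_simps)
  also have "\<dots> = (k choose m) * fact m * (k - m)" by (simp only: nat_choose_aux) (simp add: ac_simps)
  finally have e: "(k choose Suc m) * fact (Suc m) = (k choose m) * fact m * (k - m)" .
  show ?case
  proof (cases "m \<le> k")
    case True
    have "(\<Prod>j<Suc m. (of_nat k - of_nat j :: 'a)) = of_nat ((k choose m)*fact m) * (of_nat k - of_nat m)"
      using Suc by simp
    also have "\<dots> = of_nat ((k choose m) * fact m * (k - m))" using True by (simp add: of_nat_diff)
    also have "\<dots> = of_nat ((k choose Suc m)*fact (Suc m))" by (simp only: e)
    finally show ?thesis .
  next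
    case False
    then show ?thesis using Suc by (simp add: binomial_eq_0)
  qed
qed

lemma ffs_nat: "ffs (-2) (2 * of_nat k :: 'a::comm_ring_1) m = 2 ^ m * of_nat ((k choose m) * fact m)"
proof -
  have "ffs (-2) (2 * of_nat k :: 'a) m = (\<Prod>j<m. 2 * (of_nat k - of_nat j))"
    unfolding ffs_def by (intro prod.cong) (auto simp: algebra_simps)
  also have "\<dots> = 2 ^ m * (\<Prod>j<m. (of_nat k - of_nat j))"
    by (simp only: prod.distrib prod_constant card_lessThan)
  finally show ?thesis by (simp add: prod_kj)
qed

lemma factor_eq: "[:- 2 * (a + int j), -1, 1:] = ([:0,-1,1:] - 2 * [:a:]) + of_nat j * (-2)"
  by (rule poly_eqI) (auto simp: coeff_pCons of_nat_poly numeral_poly split: nat.split)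


lemma pow2_poly: "(2::int poly) ^ m = [:2 ^ m:]"
  by (induction m) (simp_all add: numeral_poly)

lemma F_ffs: "(\<Prod>j<n. [:- 2 * (a + int j), -1, 1:]) = ffs (-2) ([:0,-1,1:] - 2 * [:a:]) n"
  unfolding ffs_def by (simp only: factor_eq)

theorem lemma3p29:
  fixes s1 s2 :: int and t r1 r2 :: nat
  assumes "r1 \<ge> t"
  shows "phi (s1 + int t) s2 (int r1 - int t) (int r2) =
           phi (s1 - int t) s2 (int r1 - int t) (int r2)
           - (\<Sum>m = 1..2 * t. of_int (int ((2 * t) choose m) * int ((r1 - t) choose m)
                                * 2 ^ m * int (fact m))
                 * phi (s1 + int t) s2 (int r1 - int t - int m) (int r2))"
proof -
  define n where "n = r1 - t"
  define c where "c = s1 + int t"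
  define G where "G = (\<Prod>l<r2. [:- (s2 + int l), 1:])"
  define B where "B = ([:0,-1,1:] - 2 * [:c:] :: int poly)"
  have nn: "int r1 - int t = int n" using assms by (simp add: n_def)
  define T where "T m = of_int (int ((2 * t) choose m) * int (n choose m) * 2 ^ m * int (fact m))
                 * phi c s2 (int n - int m) (int r2)" for m
  have phiF: "phi c s2 (int n - int m) (int r2) = ffs (-2) B (n - m) * G" if "m \<le> n" for m
  proof -
    have "phi c s2 (int n - int m) (int r2) = (\<Prod>j<n - m. [:- 2 * (c + int j), -1, 1:]) * G"
      using that by (simp add: phi_def G_def of_nat_diff[symmetric] del: of_nat_diff)
    then show ?thesis by (simp only: F_ffs B_def)
  qed
  have "phi (s1 - int t) s2 (int n) (int r2) = ffs (-2) (2 * of_nat (2*t) + B) n * G"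
  proof -
    have "[:0,-1,1:] - 2 * [:s1 - int t:] = 2 * of_nat (2*t) + B"
      by (simp add: B_def c_def of_nat_poly algebra_simps flip: smult_add_left)
    have "phi (s1 - int t) s2 (int n) (int r2) = (\<Prod>j<n. [:- 2 * ((s1 - int t) + int j), -1, 1:]) * G"
      by (simp add: phi_def G_def)
    then show ?thesis by (simp only: F_ffs \<open>[:0,-1,1:] - 2 * [:s1 - int t:] = 2 * of_nat (2*t) + B\<close>)
  qed
  also have "\<dots> = (\<Sum>m\<le>n. T m)"
    unfolding ffs_binomial_sum sum_distrib_right
  proof (rule sum.cong[OF refl])
    fix m assume "m \<in> {..n}"
    then have "m \<le> n" by simp
    then show "of_nat (n choose m) * ffs (-2) (2 * of_nat (2*t)) m * ffs (-2) B (n - m) * G = T m"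
      by (simp only: ffs_nat) (simp add: T_def phiF of_nat_poly of_int_poly pow2_poly algebra_simps)
  qed
  also have "\<dots> = (\<Sum>m\<le>n + 2*t. T m)"
    by (intro sum.mono_neutral_left) (auto simp: T_def binomial_eq_0)
  also have "\<dots> = (\<Sum>m\<le>2*t. T m)"
    by (intro sum.mono_neutral_right) (auto simp: T_def binomial_eq_0)
  also have "\<dots> = T 0 + (\<Sum>m = 1..2*t. T m)"
    by (simp add: atMost_atLeast0 sum.atLeast_Suc_atMost)
  finally show ?thesis
    by (simp add: nn T_def c_def n_def)
qed

end
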